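(* Let $\delta,\zeta\ge 0$, let $n$ be a perfect square, and let $s,\bar s$ be strings of length $n$ with $|\mathrm{lcs}(s,\bar s)|\ge n^{1-\delta}$, split into blocks $b_1,\dots,b_{\sqrt n}$ and $\bar b_1,\dots,\bar b_{\sqrt n}$ as in the context. Let $\widetilde U=\{(b_{i_k},\bar b_{j_k}):1\le k\le l\}$ be a set of block pairs with $i_1<\dots<i_l$, $j_1<\dots<j_l$, $l\ge n^{1/2-2\delta}/8$ and $|\mathrm{lcs}(b_{i_k},\bar b_{j_k})|\ge n^{1/2-\delta}/2$ for every $k$, and let $\widetilde U_1\subseteq\widetilde U$ be the set of pairs in $\widetilde U$ that approximately consist of crebris symbols. If $|\widetilde U_1|\ge|\widetilde U|/2$, then the expected length of the solution returned by Algorithm A3 on $s,\bar s$ is $\Omega(n^{1/2+\zeta})$.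
   Context: $\mathrm{lcs}(x,y)$ denotes a longest common subsequence of $x,y$; $\mathsf{fr}_c(x)$ is the number of occurrences of symbol $c$ in $x$. The strings $s,\bar s$ are split into $\sqrt n$ consecutive blocks of length $\sqrt n$; $b_i,\bar b_i$ are the $i$-th blocks. For a block pair $(b_i,\bar b_j)$, a symbol $c$ is crebris if $\min\{\mathsf{fr}_c(b_i),\mathsf{fr}_c(\bar b_j)\}\ge n^{4\delta+\zeta}$. The pair approximately consists of crebris symbols if $\sum_{c\in C}\mathsf{fr}_c(b_i)\ge n^{1/2-2\delta}/4$, where $C$ is the set of crebris symbols of the pair. Algorithm A3 (randomized): for every $i,j\in[\sqrt n]$ pick a uniformly random position of $b_i$, let $c_{i,j}$ be the symbol there, and set $T[i][j]=\min\{\mathsf{fr}_{c_{i,j}}(b_i),\mathsf{fr}_{c_{i,j}}(\bar b_j)\}$. Compute $D[i][j]=0$ if $i=0$ or $j=0$, and $D[i][j]=\max\{D[i][j-1],D[i-1][j],T[i][j]+D[i-1][j-1]\}$ otherwise. The returned solution is the longest common subsequence of $s,\bar s$ subject to: characters of one block of $s$ are matched only to characters of a single block of $\bar s$ and vice versa, and if $b_i$ is matched to $\bar b_j$ all matched symbols are $c_{i,j}$; its length is $D[\sqrt n][\sqrt n]$. *)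

theory Defs
  imports Complex_Main "HOL-Library.Sublist" "HOL-Library.FuncSet"
begin

definition lcs_len :: "'a list \<Rightarrow> 'a list \<Rightarrow> nat" where
  "lcs_len x y = Max (length ` {z. subseq z x \<and> subseq z y})"

definition fr :: "'a \<Rightarrow> 'a list \<Rightarrow> nat" where
  "fr c x = count_list x c"

text \<open>The i-th block (1-indexed, i in 1..m) of length m of a string.\<close>
definition block :: "nat \<Rightarrow> 'a list \<Rightarrow> nat \<Rightarrow> 'a list" where
  "block m s i = take m (drop ((i - 1) * m) s)"

definition crebris :: "real \<Rightarrow> real \<Rightarrow> nat \<Rightarrow> 'a list \<Rightarrow> 'a list \<Rightarrow> 'a \<Rightarrow> bool" where
  "crebris \<delta> \<zeta> n b b' c \<longleftrightarrow> real (min (fr c b) (fr c b')) \<ge> real n powr (4 * \<delta> + \<zeta>)"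

text \<open>The pair (b, b') approximately consists of crebris symbols.  Symbols not occurring
  in b contribute 0 to the sum, so summing over the symbols of b is the sum over all of C.\<close>
definition approx_crebris :: "real \<Rightarrow> real \<Rightarrow> nat \<Rightarrow> 'a list \<Rightarrow> 'a list \<Rightarrow> bool" where
  "approx_crebris \<delta> \<zeta> n b b' \<longleftrightarrow>
     real (\<Sum>c\<in>{c \<in> set b. crebris \<delta> \<zeta> n b b' c}. fr c b) \<ge> real n powr (1/2 - 2 * \<delta>) / 4"

fun dp :: "(nat \<Rightarrow> nat \<Rightarrow> nat) \<Rightarrow> nat \<Rightarrow> nat \<Rightarrow> nat" where
  "dp T 0 j = 0"
| "dp T (Suc i) 0 = 0"
| "dp T (Suc i) (Suc j) = max (max (dp T (Suc i) j) (dp T i (Suc j))) (T (Suc i) (Suc j) + dp T i j)"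

text \<open>Table T of Algorithm A3 given the random positions p (p (i,j) < m is a position of b_i).\<close>
definition A3_table :: "nat \<Rightarrow> 'a list \<Rightarrow> 'a list \<Rightarrow> (nat \<times> nat \<Rightarrow> nat) \<Rightarrow> nat \<Rightarrow> nat \<Rightarrow> nat" where
  "A3_table m s s' p i j =
     (let c = block m s i ! p (i, j) in min (fr c (block m s i)) (fr c (block m s' j)))"

text \<open>Space of random choices: independent uniform positions for every (i,j).\<close>
definition A3_choices :: "nat \<Rightarrow> (nat \<times> nat \<Rightarrow> nat) set" where
  "A3_choices m = PiE ({1..m} \<times> {1..m}) (\<lambda>_. {..<m})"

definition A3_expected :: "nat \<Rightarrow> 'a list \<Rightarrow> 'a list \<Rightarrow> real" where
  "A3_expected m s s' =
     (\<Sum>p\<in>A3_choices m. real (dp (A3_table m s s' p) m m)) / real (card (A3_choices m))"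

end

theory Submission
  imports Defs
begin

lemma dp_mono_j: "dp T i j \<le> dp T i (Suc j)"
  by (cases i) auto

lemma dp_mono_i: "dp T i j \<le> dp T (Suc i) j"
proof (cases j)
  case 0 then show ?thesis by (cases i) auto
next
  case (Suc j') then show ?thesis by auto
qed

lemma dp_mono_j2: "j \<le> j' \<Longrightarrow> dp T i j \<le> dp T i j'"
  by (induction j' rule: dec_induct) (auto intro: order_trans dp_mono_j)

lemma dp_mono_i2: "i \<le> i' \<Longrightarrow> dp T i j \<le> dp T i' j"
  by (induction i' rule: dec_induct) (auto intro: order_trans dp_mono_i)

lemma dp_mono: "i \<le> i' \<Longrightarrow> j \<le> j' \<Longrightarrow> dp T i j \<le> dp T i' j'"
  by (meson dp_mono_i2 dp_mono_j2 order_trans)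

lemma dp_step: "i \<ge> 1 \<Longrightarrow> j \<ge> 1 \<Longrightarrow> T i j + dp T (i-1) (j-1) \<le> dp T i j"
  by (cases i; cases j) auto

lemma dp_chain:
  fixes K :: "nat set"
  assumes "finite K"
  shows "(\<forall>k\<in>K. \<forall>k'\<in>K. k < k' \<longrightarrow> ii k < ii k' \<and> jj k < jj k') \<longrightarrow>
         (\<forall>k\<in>K. 1 \<le> ii k \<and> ii k \<le> I \<and> 1 \<le> jj k \<and> jj k \<le> J) \<longrightarrow>
         (\<Sum>k\<in>K. T (ii k) (jj k)) \<le> dp T I J"
  using assms
proof (induction K arbitrary: I J rule: finite_linorder_max_induct)
  case empty
  then show ?case by simp
next
  case (insert b A)
  show ?case
  proof (intro impI)
    assume mo: "\<forall>k\<in>insert b A. \<forall>k'\<in>insert b A. k < k' \<longrightarrow> ii k < ii k' \<and> jj k < jj k'"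
      and bd: "\<forall>k\<in>insert b A. 1 \<le> ii k \<and> ii k \<le> I \<and> 1 \<le> jj k \<and> jj k \<le> J"
    have bA: "b \<notin> A" using insert.hyps(2) by blast
    have "(\<Sum>k\<in>A. T (ii k) (jj k)) \<le> dp T (ii b - 1) (jj b - 1)"
      using insert.IH[of "ii b - 1" "jj b - 1"] mo bd insert.hyps(2)
      by (smt (verit) insert_iff le_diff_conv2 Suc_leI Suc_eq_plus1 nat_le_linear)
    then have "(\<Sum>k\<in>insert b A. T (ii k) (jj k)) \<le> dp T (ii b) (jj b)"
      using dp_step[of "ii b" "jj b" T] bd bA insert.hyps(1) by auto
    also have "\<dots> \<le> dp T I J" using bd by (auto intro: dp_mono)
    finally show "(\<Sum>k\<in>insert b A. T (ii k) (jj k)) \<le> dp T I J" .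
  qed
qed

lemma sum_PiE_coord:
  fixes f :: "'b \<Rightarrow> real"
  assumes "finite I" "a \<in> I" "\<And>i. i \<in> I \<Longrightarrow> finite (A i)"
  shows "(\<Sum>p\<in>PiE I A. f (p a)) = real (\<Prod>i\<in>I-{a}. card (A i)) * (\<Sum>x\<in>A a. f x)"
proof -
  have fS: "finite (PiE I A)" using assms by (simp add: finite_PiE)
  have "(\<Sum>p\<in>PiE I A. f (p a)) = (\<Sum>x\<in>A a. \<Sum>p\<in>{p. p \<in> PiE I A \<and> p a = x}. f (p a))"
    by (rule sum.group[symmetric]) (use fS assms in \<open>auto simp: PiE_iff\<close>)
  also have "\<dots> = (\<Sum>x\<in>A a. real (\<Prod>i\<in>I-{a}. card (A i)) * f x)"
  proof (rule sum.cong[OF refl])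
    fix x assume x: "x \<in> A a"
    have eq: "{p. p \<in> PiE I A \<and> p a = x} = PiE I (A(a:={x}))"
      using x assms(2) unfolding PiE_iff extensional_def
      by (auto split: if_splits)
    have "card (PiE I (A(a:={x}))) = (\<Prod>i\<in>I. card ((A(a:={x})) i))"
      using assms by (simp add: card_PiE)
    also have "\<dots> = card ((A(a:={x})) a) * (\<Prod>i\<in>I-{a}. card ((A(a:={x})) i))"
      using assms by (simp add: prod.remove)
    also have "\<dots> = (\<Prod>i\<in>I-{a}. card (A i))"
      using prod.cong[of "I-{a}" "I-{a}" "\<lambda>i. card ((A(a:={x})) i)" "\<lambda>i. card (A i)"] by simp
    finally have "card {p. p \<in> PiE I A \<and> p a = x} = (\<Prod>i\<in>I-{a}. card (A i))" using eq by simp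
    then show "(\<Sum>p\<in>{p. p \<in> PiE I A \<and> p a = x}. f (p a)) = real (\<Prod>i\<in>I-{a}. card (A i)) * f x"
      by simp
  qed
  finally show ?thesis by (simp add: sum_distrib_left)
qed

lemma card_PiE_coord:
  assumes "finite I" "a \<in> I"
  shows "card (PiE I A) = card (A a) * (\<Prod>i\<in>I-{a}. card (A i))"
  using assms by (simp add: card_PiE prod.remove)


lemma sum_list_map_count_real:
  fixes f :: "'a \<Rightarrow> real"
  shows "sum_list (map f xs) = sum (\<lambda>x. real (count_list xs x) * f x) (set xs)"
proof(induction xs)
  case (Cons x xs)
  show ?case (is "?l = ?r")
  proof cases
    assume "x \<in> set xs"
    have "?l = f x + (\<Sum>x\<in>set xs. real (count_list xs x) * f x)" by (simp add: Cons.IH)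
    also have "set xs = insert x (set xs - {x})" using \<open>x \<in> set xs\<close>by blast
    also have "f x + (\<Sum>x\<in>insert x (set xs - {x}). real (count_list xs x) * f x) = ?r"
      by (simp add: sum.insert_remove eq_commute algebra_simps sum.distrib)
    finally show ?thesis .
  next
    assume "x \<notin> set xs"
    hence "\<And>xa. xa \<in> set xs \<Longrightarrow> x \<noteq> xa" by blast
    thus ?thesis by (simp add: Cons.IH \<open>x \<notin> set xs\<close>)
  qed
qed simp

lemma pair_bound:
  fixes b b' :: "'a list"
  assumes ac: "approx_crebris \<delta> \<zeta> n b b'" and len: "length b = m"
  shows "real n powr (1/2 - 2 * \<delta>) / 4 * real n powr (4 * \<delta> + \<zeta>)
         \<le> (\<Sum>x<m. real (min (fr (b!x) b) (fr (b!x) b')))"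
proof -
  define K where "K = real n powr (4 * \<delta> + \<zeta>)"
  define f where "f c = real (min (fr c b) (fr c b'))" for c
  define g where "g c = (if crebris \<delta> \<zeta> n b b' c then K else 0)" for c
  have "(\<Sum>x<m. real (min (fr (b!x) b) (fr (b!x) b'))) = sum_list (map f b)"
    using len by (simp add: sum_list_sum_nth f_def atLeast0LessThan)
  also have "sum_list (map g b) \<le> sum_list (map f b)"
    by (rule sum_list_mono) (auto simp: g_def f_def K_def crebris_def)
  moreover have "sum_list (map g b) = (\<Sum>c\<in>set b. real (count_list b c) * g c)"
    by (rule sum_list_map_count_real)
  moreover have "\<dots> = (\<Sum>c\<in>{c \<in> set b. crebris \<delta> \<zeta> n b b' c}. real (count_list b c) * K)"
    by (simp add: g_def sum.inter_filter[symmetric] if_distrib cong: if_cong)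
  moreover have "\<dots> = K * real (\<Sum>c\<in>{c \<in> set b. crebris \<delta> \<zeta> n b b' c}. fr c b)"
    by (simp add: sum_distrib_left fr_def mult.commute)
  moreover have "real n powr (1/2 - 2 * \<delta>) / 4 * K \<le> K * real (\<Sum>c\<in>{c \<in> set b. crebris \<delta> \<zeta> n b b' c}. fr c b)"
  proof -
    have "K \<ge> 0" unfolding K_def by simp
    then show ?thesis
      using ac mult_left_mono[of "real n powr (1/2 - 2 * \<delta>) / 4" "real (\<Sum>c\<in>{c \<in> set b. crebris \<delta> \<zeta> n b b' c}. fr c b)" K]
      unfolding approx_crebris_def by (simp add: mult.commute)
  qed
  ultimately show ?thesis unfolding K_def by linarith
qed


theorem mainTheorem3:
  fixes \<delta> \<zeta> :: real
  assumes "\<delta> \<ge> 0" and "\<zeta> \<ge> 0"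
  shows "\<exists>C > 0. \<exists>N. \<forall>(m::nat) (n::nat) (s::'a list) (s'::'a list) (l::nat) (ii::nat \<Rightarrow> nat) (jj::nat \<Rightarrow> nat).
     n = m ^ 2 \<and> n \<ge> N \<and>
     length s = n \<and> length s' = n \<and>
     real (lcs_len s s') \<ge> real n powr (1 - \<delta>) \<and>
     (\<forall>k\<in>{1..l}. ii k \<in> {1..m} \<and> jj k \<in> {1..m}) \<and>
     (\<forall>k\<in>{1..l}. \<forall>k'\<in>{1..l}. k < k' \<longrightarrow> ii k < ii k' \<and> jj k < jj k') \<and>
     real l \<ge> real n powr (1/2 - 2 * \<delta>) / 8 \<and>
     (\<forall>k\<in>{1..l}. real (lcs_len (block m s (ii k)) (block m s' (jj k))) \<ge> real n powr (1/2 - \<delta>) / 2) \<and>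
     real (card {(i, j) \<in> (\<lambda>k. (ii k, jj k)) ` {1..l}.
                   approx_crebris \<delta> \<zeta> n (block m s i) (block m s' j)})
       \<ge> real (card ((\<lambda>k. (ii k, jj k)) ` {1..l})) / 2
     \<longrightarrow> A3_expected m s s' \<ge> C * real n powr (1/2 + \<zeta>)"
proof (intro exI[of _ "1/64"] conjI exI[of _ 1] allI impI)
  show "(0::real) < 1/64" by simp
  fix m n :: nat and s s' :: "'a list" and l :: nat and ii jj :: "nat \<Rightarrow> nat"
  assume H: "n = m ^ 2 \<and> n \<ge> 1 \<and>
     length s = n \<and> length s' = n \<and>
     real (lcs_len s s') \<ge> real n powr (1 - \<delta>) \<and>
     (\<forall>k\<in>{1..l}. ii k \<in> {1..m} \<and> jj k \<in> {1..m}) \<and>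
     (\<forall>k\<in>{1..l}. \<forall>k'\<in>{1..l}. k < k' \<longrightarrow> ii k < ii k' \<and> jj k < jj k') \<and>
     real l \<ge> real n powr (1/2 - 2 * \<delta>) / 8 \<and>
     (\<forall>k\<in>{1..l}. real (lcs_len (block m s (ii k)) (block m s' (jj k))) \<ge> real n powr (1/2 - \<delta>) / 2) \<and>
     real (card {(i, j) \<in> (\<lambda>k. (ii k, jj k)) ` {1..l}.
                   approx_crebris \<delta> \<zeta> n (block m s i) (block m s' j)})
       \<ge> real (card ((\<lambda>k. (ii k, jj k)) ` {1..l})) / 2"
  have nm: "n = m^2" and n1: "n \<ge> 1" and ls: "length s = n"
    and rng: "\<forall>k\<in>{1..l}. ii k \<in> {1..m} \<and> jj k \<in> {1..m}"
    and mo: "\<forall>k\<in>{1..l}. \<forall>k'\<in>{1..l}. k < k' \<longrightarrow> ii k < ii k' \<and> jj k < jj k'"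
    and hl: "real l \<ge> real n powr (1/2 - 2 * \<delta>) / 8"
    and hc: "real (card {(i, j) \<in> (\<lambda>k. (ii k, jj k)) ` {1..l}.
                   approx_crebris \<delta> \<zeta> n (block m s i) (block m s' j)})
       \<ge> real (card ((\<lambda>k. (ii k, jj k)) ` {1..l})) / 2"
    using H by blast+
  have m1: "m \<ge> 1" using nm n1 by (cases m) auto
  have mreal: "real m = real n powr (1/2)"
    using nm by (simp add: powr_half_sqrt)
  define I where "I = {1..m} \<times> {1..m}"
  define S where "S = A3_choices m"
  have S_def': "S = PiE I (\<lambda>_. {..<m})" unfolding S_def A3_choices_def I_def by simp
  have finI: "finite I" unfolding I_def by simp
  have finS: "finite S" unfolding S_def' using finI by (simp add: finite_PiE)
  define P where "P = (\<Prod>i\<in>I-{(1,1)}. card ({..<m::nat}))"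
  have oneI: "(1,1) \<in> I" unfolding I_def using m1 by auto
  have cardS: "card S = m * P"
    unfolding S_def' P_def using card_PiE_coord[OF finI oneI, of "\<lambda>_. {..<m}"] by simp
  have Ppos: "P > 0" unfolding P_def using m1 by simp
  define K1 where "K1 = {k \<in> {1..l}. approx_crebris \<delta> \<zeta> n (block m s (ii k)) (block m s' (jj k))}"
  define T where "T p = A3_table m s s' p" for p
  define Q where "Q = real n powr (1/2 - 2 * \<delta>) / 4 * real n powr (4 * \<delta> + \<zeta>)"
  have finK1: "finite K1" unfolding K1_def by simp
  have step1: "(\<Sum>k\<in>K1. real (T p (ii k) (jj k))) \<le> real (dp (T p) m m)" for p
  proof -
    have "(\<Sum>k\<in>K1. T p (ii k) (jj k)) \<le> dp (T p) m m"
      using dp_chain[OF finK1, of ii jj m m "T p"] mo rng unfolding K1_def by auto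
    then show ?thesis by (metis of_nat_le_iff of_nat_sum)
  qed
  have step3: "real P * Q \<le> (\<Sum>p\<in>S. real (T p (ii k) (jj k)))" if k: "k \<in> K1" for k
  proof -
    define b where "b = block m s (ii k)"
    define b' where "b' = block m s' (jj k)"
    have a: "(ii k, jj k) \<in> I" using k rng unfolding K1_def I_def by auto
    have ac: "approx_crebris \<delta> \<zeta> n b b'" using k unfolding K1_def b_def b'_def by auto
    have lenb: "length b = m"
    proof -
      have "ii k \<le> m" "ii k \<ge> 1" using k rng unfolding K1_def by auto
      then have "(ii k - 1) * m + m \<le> m * m" by (metis diff_le_self le_diff_conv mult.commute mult_le_mono2 mult_Suc_right Suc_diff_1 zero_less_one less_le_trans add.commute)
      then show ?thesis unfolding b_def block_def using ls nm by (simp add: power2_eq_square)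
    qed
    define f where "f x = real (min (fr (b!x) b) (fr (b!x) b'))" for x
    have Teq: "real (T p (ii k) (jj k)) = f (p (ii k, jj k))" for p
      unfolding T_def A3_table_def f_def b_def b'_def by (simp add: Let_def)
    have "(\<Sum>p\<in>S. real (T p (ii k) (jj k))) = (\<Sum>p\<in>S. f (p (ii k, jj k)))"
      using Teq by simp
    also have "\<dots> = real (\<Prod>i\<in>I-{(ii k, jj k)}. card {..<m}) * (\<Sum>x<m. f x)"
      unfolding S_def' by (rule sum_PiE_coord[OF finI a]) simp
    also have "(\<Prod>i\<in>I-{(ii k, jj k)}. card {..<m}) = P"
      unfolding P_def using a oneI finI by (simp add: card_Diff_singleton)
    finally have eq: "(\<Sum>p\<in>S. real (T p (ii k) (jj k))) = real P * (\<Sum>x<m. f x)" .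
    have "Q \<le> (\<Sum>x<m. f x)" unfolding Q_def f_def using pair_bound[OF ac lenb] .
    then show ?thesis unfolding eq using Ppos by simp
  qed
  have inj: "inj_on (\<lambda>k. (ii k, jj k)) {1..l}"
  proof (rule inj_onI)
    fix x y assume "x \<in> {1..l}" "y \<in> {1..l}" "(ii x, jj x) = (ii y, jj y)"
    then show "x = y" using mo by (metis less_irrefl linorder_neqE_nat prod.inject)
  qed
  have imgK1: "{(i, j) \<in> (\<lambda>k. (ii k, jj k)) ` {1..l}.
                   approx_crebris \<delta> \<zeta> n (block m s i) (block m s' j)} = (\<lambda>k. (ii k, jj k)) ` K1"
    unfolding K1_def by auto
  have cK1: "card ((\<lambda>k. (ii k, jj k)) ` K1) = card K1"
    by (rule card_image) (rule inj_on_subset[OF inj], auto simp: K1_def)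
  have cl: "card ((\<lambda>k. (ii k, jj k)) ` {1..l}) = l" using card_image[OF inj] by simp
  have K1l: "real (card K1) \<ge> real l / 2" using hc imgK1 cK1 cl by simp
  have "real (card K1) * (real P * Q) \<le> (\<Sum>k\<in>K1. \<Sum>p\<in>S. real (T p (ii k) (jj k)))"
    using sum_mono[of K1 "\<lambda>_. real P * Q", OF step3] by simp
  also have "\<dots> = (\<Sum>p\<in>S. \<Sum>k\<in>K1. real (T p (ii k) (jj k)))" by (rule sum.swap)
  also have "\<dots> \<le> (\<Sum>p\<in>S. real (dp (T p) m m))" by (rule sum_mono) (rule step1)
  finally have main: "real (card K1) * (real P * Q) \<le> (\<Sum>p\<in>S. real (dp (T p) m m))" .
  have npos: "real n > 0" using n1 by simp
  have Qpos: "Q \<ge> 0" unfolding Q_def by simp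
  have E: "A3_expected m s s' = (\<Sum>p\<in>S. real (dp (T p) m m)) / (real m * real P)"
    unfolding A3_expected_def S_def T_def using cardS S_def by simp
  have "A3_expected m s s' \<ge> real (card K1) * Q / real m"
    unfolding E using main Ppos m1 by (simp add: field_simps)
  moreover have "real (card K1) * Q / real m \<ge> (real n powr (1/2 - 2 * \<delta>) / 16) * Q / real m"
    using K1l hl Qpos m1 by (intro divide_right_mono mult_right_mono) auto
  moreover have "(real n powr (1/2 - 2 * \<delta>) / 16) * Q / real m = 1/64 * real n powr (1/2 + \<zeta>)"
  proof -
    have "(real n powr (1/2 - 2 * \<delta>) / 16) * Q / real m =
      (real n powr (1/2 - 2 * \<delta>) * real n powr (1/2 - 2 * \<delta>) * real n powr (4 * \<delta> + \<zeta>) / real n powr (1/2)) / 64"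
      unfolding Q_def mreal by simp
    also have "real n powr (1/2 - 2 * \<delta>) * real n powr (1/2 - 2 * \<delta>) * real n powr (4 * \<delta> + \<zeta>)
       = real n powr ((1/2 - 2 * \<delta>) + (1/2 - 2 * \<delta>) + (4 * \<delta> + \<zeta>))"
      by (simp only: powr_add)
    also have "\<dots> / real n powr (1/2) = real n powr ((1/2 - 2 * \<delta>) + (1/2 - 2 * \<delta>) + (4 * \<delta> + \<zeta>) - 1/2)"
      by (rule powr_diff[symmetric])
    also have "(1/2 - 2 * \<delta>) + (1/2 - 2 * \<delta>) + (4 * \<delta> + \<zeta>) - 1/2 = 1/2 + \<zeta>" by simp
    finally show ?thesis by simp
  qed
  ultimately show "1/64 * real n powr (1/2 + \<zeta>) \<le> A3_expected m s s'" by linarith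
qed

end
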